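(* Fix $L>0$. There exists $C>0$ such that for all $u^0\in H^6(0,L)$ with $u^0,Pu^0,P^2u^0\in\mathrm{Dom}(P)$, all $\delta t\in(0,1)$ and $J\ge2$ with $\delta t/\delta x^2\le1/2$, and all $n\ge1$, $$\Big\|\delta t\sum_{k=0}^{n-1}(\mathrm{Id}+\delta t\,\mathsf P_\delta)^{n-1-k}\,\delta x^2\,\mathcal L^2_\delta u(k\delta t,\cdot)\Big\|_{\ell^2}\le C\,\delta x^2\sum_{p=1}^\infty|\alpha_p|p^4,$$ where $u$ is the solution of $\partial_tu=Pu$, $u(0)=u^0$.
   Context: $P=\partial_x^2$ with homogeneous Neumann conditions on $(0,L)$, $\mathrm{Dom}(P)=\{u\in L^2:\partial_x^2u\in L^2,\ \partial_xu(0)=\partial_xu(L)=0\}$; $c_0=1$, $c_p(x)=\sqrt2\cos(p\pi x/L)$, $\alpha_p=\frac1L\int_0^Lu^0c_p\,dx$, $u(t)=\sum_{p\ge0}\alpha_pe^{-p^2\pi^2t/L^2}c_p$. For $J\ge2$: $\delta x=L/(J-1)$, $x_j=j\delta x$, $\|\mathsf v\|_{\ell^2}^2=\frac1J\sum_j\mathsf v_j^2$, $\mathsf P_\delta=\frac1{\delta x^2}\times$ the tridiagonal $J\times J$ matrix with diagonal $(-1,-2,\dots,-2,-1)$ and off-diagonals $1$. For smooth $w$, $\mathcal L^2_\delta w\in\mathbb R^J$ has first and last entries $0$ and, for $1\le j\le J-2$, $j$-th entry $\frac16\Big(\int_0^1(1-\sigma)^3\partial_x^4w(x_j+\sigma\delta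 x)\,d\sigma+\int_0^1(\sigma-1)^3\partial_x^4w(x_j-\sigma\delta x)\,d\sigma\Big)$. *)

theory Defs
  imports "HOL-Analysis.Analysis"
begin

text \<open>Sobolev-type regularity on (0,L): D 0 is a continuous representative of f
  (equal to f almost everywhere on [0,L]), D k are the classical derivatives of
  order k < 6 on [0,L], D 5 is absolutely continuous with derivative D 6 in L^2(0,L).\<close>
definition sobolev6_reps :: "real \<Rightarrow> (real \<Rightarrow> real) \<Rightarrow> (nat \<Rightarrow> real \<Rightarrow> real) \<Rightarrow> bool" where
  "sobolev6_reps L f D \<longleftrightarrow>
     (AE x in lebesgue. x \<in> {0..L} \<longrightarrow> f x = D 0 x) \<and>
     (\<forall>k<5. \<forall>x\<in>{0..L}. (D k has_real_derivative D (Suc k) x) (at x within {0..L})) \<and>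
     set_integrable lebesgue {0..L} (D 6) \<and>
     set_integrable lebesgue {0..L} (\<lambda>x. (D 6 x)^2) \<and>
     (\<forall>x\<in>{0..L}. D 5 x = D 5 0 + (\<integral>y\<in>{0..x}. D 6 y \<partial>lebesgue))"

definition H6 :: "real \<Rightarrow> (real \<Rightarrow> real) \<Rightarrow> bool" where
  "H6 L f \<longleftrightarrow> (\<exists>D. sobolev6_reps L f D)"

text \<open>u, P u, P^2 u all lie in Dom(P) (for u in H^6): Neumann conditions on the
  first, third and fifth derivatives.\<close>
definition iter_dom_P :: "real \<Rightarrow> (real \<Rightarrow> real) \<Rightarrow> bool" where
  "iter_dom_P L f \<longleftrightarrow> (\<exists>D. sobolev6_reps L f D \<and>
      D 1 0 = 0 \<and> D 1 L = 0 \<and> D 3 0 = 0 \<and> D 3 L = 0 \<and> D 5 0 = 0 \<and> D 5 L = 0)"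

definition cfun :: "real \<Rightarrow> nat \<Rightarrow> real \<Rightarrow> real" where
  "cfun L p x = (if p = 0 then 1 else sqrt 2 * cos (real p * pi * x / L))"

definition alpha :: "real \<Rightarrow> (real \<Rightarrow> real) \<Rightarrow> nat \<Rightarrow> real" where
  "alpha L u0 p = (1 / L) * (\<integral>x\<in>{0..L}. u0 x * cfun L p x \<partial>lebesgue)"

definition heat_sol :: "real \<Rightarrow> (real \<Rightarrow> real) \<Rightarrow> real \<Rightarrow> real \<Rightarrow> real" where
  "heat_sol L u0 t x = (\<Sum>p. alpha L u0 p * exp (- ((real p)^2 * pi^2 * t / L^2)) * cfun L p x)"

text \<open>Vectors of R^J are functions nat => real, indices 0..J-1.\<close>
definition l2norm :: "nat \<Rightarrow> (nat \<Rightarrow> real) \<Rightarrow> real" where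
  "l2norm J v = sqrt ((1 / real J) * (\<Sum>j<J. (v j)^2))"

definition Pdelta :: "nat \<Rightarrow> real \<Rightarrow> (nat \<Rightarrow> real) \<Rightarrow> nat \<Rightarrow> real" where
  "Pdelta J dx v j =
     (if j = 0 then v 1 - v 0
      else if j = J - 1 then v (J - 2) - v (J - 1)
      else v (j - 1) - 2 * v j + v (j + 1)) / dx^2"

definition scheme_step :: "nat \<Rightarrow> real \<Rightarrow> real \<Rightarrow> (nat \<Rightarrow> real) \<Rightarrow> nat \<Rightarrow> real" where
  "scheme_step J dx dt v j = v j + dt * Pdelta J dx v j"

definition L2delta :: "nat \<Rightarrow> real \<Rightarrow> (real \<Rightarrow> real) \<Rightarrow> nat \<Rightarrow> real" where
  "L2delta J dx w j =
     (if 1 \<le> j \<and> j \<le> J - 2 then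
        (1 / 6) * ((LBINT s=0..1. (1 - s)^3 * (deriv ^^ 4) w (real j * dx + s * dx))
                 + (LBINT s=0..1. (s - 1)^3 * (deriv ^^ 4) w (real j * dx - s * dx)))
      else 0)"

end

theory Submission
  imports Defs
begin

lemma sf_leb: "sigma_finite_measure (lebesgue :: real measure)"
proof -
  obtain A :: "real set set" where A: "countable A" "A \<subseteq> sets lborel" "\<Union>A = space lborel"
     "\<forall>a\<in>A. emeasure lborel a \<noteq> \<infinity>"
    using sigma_finite_lborel unfolding sigma_finite_measure_def by blast
  show ?thesis unfolding sigma_finite_measure_def
    apply (rule exI[of _ A])
    using A by (auto simp: emeasure_completion)
qed

interpretation leb2: pair_sigma_finite "lebesgue :: real measure" "lebesgue :: real measure"
  by (simp add: pair_sigma_finite_def sf_leb)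

lemma id_leb_meas[measurable]: "(\<lambda>x::real. x) \<in> borel_measurable lebesgue"
  by (rule measurable_completion) simp

lemma fst_leb_meas[measurable]: "(fst :: real\<times>real \<Rightarrow> real) \<in> borel_measurable (lebesgue \<Otimes>\<^sub>M lebesgue)"
  using measurable_compose[OF measurable_fst id_leb_meas] by simp
lemma snd_leb_meas[measurable]: "(snd :: real\<times>real \<Rightarrow> real) \<in> borel_measurable (lebesgue \<Otimes>\<^sub>M lebesgue)"
  using measurable_compose[OF measurable_snd id_leb_meas] by simp

lemma meas_test: "(\<lambda>z::real\<times>real. (if snd z \<le> fst z then 1 else 0) * sin (fst z)) \<in> borel_measurable (lebesgue \<Otimes>\<^sub>M lebesgue)"
  by measurable

lemma int_sin_Icc:
  fixes a b w :: real assumes "a \<le> b" "w \<noteq> 0"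
  shows "(\<integral>x. indicator {a..b} x * sin (w*x) \<partial>lebesgue) = (cos (w*a) - cos (w*b)) / w"
proof -
  have ai: "set_integrable lebesgue {a..b} (\<lambda>x. sin (w*x))"
    by (rule absolutely_integrable_continuous_real) (auto intro!: continuous_intros)
  have "((\<lambda>x. sin (w*x)) has_integral ((\<lambda>x. - cos (w*x) / w) b - (\<lambda>x. - cos (w*x) / w) a)) {a..b}"
    apply (rule fundamental_theorem_of_calculus[OF assms(1)])
    using assms(2)
    by (auto intro!: derivative_eq_intros simp: has_real_derivative_iff_has_vector_derivative[symmetric])
  then have "integral {a..b} (\<lambda>x. sin (w*x)) = (cos (w*a) - cos (w*b)) / w"
    by (auto dest!: integral_unique simp: diff_divide_distrib)
  with set_lebesgue_integral_eq_integral(2)[OF ai] show ?thesis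
    by (simp add: set_lebesgue_integral_def)
qed

lemma fub:
  fixes g F :: "real \<Rightarrow> real" and L w :: real
  assumes L: "0 \<le> L" and w: "w > 0" and gi: "set_integrable lebesgue {0..L} g"
    and F: "\<And>x. x\<in>{0..L} \<Longrightarrow> F x = (\<integral>y\<in>{0..x}. g y \<partial>lebesgue)"
  shows "\<bar>(\<integral>x\<in>{0..L}. F x * sin (w*x) \<partial>lebesgue)\<bar> \<le> 2/w * (\<integral>y\<in>{0..L}. \<bar>g y\<bar> \<partial>lebesgue)"
proof -
  define G where "G y = indicator {0..L} y * g y" for y
  have Gi: "integrable lebesgue G" using gi unfolding set_integrable_def G_def by simp
  have Gm[measurable]: "G \<in> borel_measurable lebesgue" using Gi by (rule borel_measurable_integrable)
  define f where "f x y = indicator {0..L} x * (if y \<le> x then 1 else 0) * sin (w*x) * G y" for x y :: real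
  define h where "h = (\<lambda>(x::real,y::real). indicator {0..L} x * \<bar>G y\<bar>)"
  have hm[measurable]: "h \<in> borel_measurable (lebesgue \<Otimes>\<^sub>M lebesgue)" unfolding h_def by measurable
  have fm[measurable]: "case_prod f \<in> borel_measurable (lebesgue \<Otimes>\<^sub>M lebesgue)" unfolding f_def by measurable
  have hi: "integrable (lebesgue \<Otimes>\<^sub>M lebesgue) h"
  proof (rule leb2.Fubini_integrable[OF hm])
    have "(\<lambda>x. \<integral>y. norm (h (x, y)) \<partial>lebesgue) = (\<lambda>x. (\<integral>y. \<bar>G y\<bar> \<partial>lebesgue) * indicator {0..L} x)"
      unfolding h_def by (auto simp: abs_mult)
    moreover have "integrable lebesgue (indicat_real {0..L})"
      by (rule integrable_real_indicator) (use L in \<open>auto simp: emeasure_lborel_Icc\<close>)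
    ultimately show "integrable lebesgue (\<lambda>x. \<integral>y. norm (h (x, y)) \<partial>lebesgue)"
      by simp
    show "AE x in lebesgue. integrable lebesgue (\<lambda>y. h (x, y))"
      unfolding h_def using Gi by auto
  qed
  have fi: "integrable (lebesgue \<Otimes>\<^sub>M lebesgue) (case_prod f)"
    apply (rule Bochner_Integration.integrable_bound[OF hi fm])
    unfolding f_def h_def
  proof (intro AE_I2, clarify)
    fix x y :: real
    have "\<bar>indicator {0..L} x * (if y \<le> x then 1 else 0) * sin (w*x) * G y\<bar>
       = indicator {0..L} x * (if y \<le> x then 1 else 0) * \<bar>sin (w*x)\<bar> * \<bar>G y\<bar>"
      by (simp add: abs_mult indicator_def)
    also have "\<dots> \<le> indicator {0..L} x * \<bar>G y\<bar>"
    proof -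
      have "(if y \<le> x then 1 else 0) * \<bar>sin (w*x)\<bar> \<le> (1::real)"
        using abs_sin_le_one[of "w*x"] by auto
      moreover have "0 \<le> indicator {0..L} x * \<bar>G y\<bar>" by simp
      ultimately have "indicator {0..L} x * \<bar>G y\<bar> * ((if y \<le> x then 1 else 0) * \<bar>sin (w*x)\<bar>) \<le> indicator {0..L} x * \<bar>G y\<bar>"
        by (metis mult.right_neutral mult_left_mono)
      then show ?thesis by (simp add: algebra_simps)
    qed
    finally show "norm (indicator {0..L} x * (if y \<le> x then 1 else 0) * sin (w*x) * G y)
        \<le> norm (indicator {0..L} x * \<bar>G y\<bar>)" by simp
  qed
  have Fub: "(\<integral>y. (\<integral>x. f x y \<partial>lebesgue) \<partial>lebesgue) = (\<integral>x. (\<integral>y. f x y \<partial>lebesgue) \<partial>lebesgue)"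
    by (rule leb2.Fubini_integral[OF fi])
  have inner1: "(\<integral>y. f x y \<partial>lebesgue) = indicator {0..L} x *\<^sub>R (F x * sin (w*x))" for x
  proof (cases "x \<in> {0..L}")
    case True
    have "(\<lambda>y. f x y) = (\<lambda>y. sin (w*x) * (indicator {0..x} y *\<^sub>R g y))"
      using True unfolding f_def G_def by (auto simp: indicator_def)
    then show ?thesis using True F[OF True] by (simp add: set_lebesgue_integral_def)
  next
    case False
    then show ?thesis unfolding f_def by simp
  qed
  have inner2: "(\<integral>x. f x y \<partial>lebesgue) = G y * ((cos (w*y) - cos (w*L)) / w)" for y
  proof (cases "y \<in> {0..L}")
    case True
    have "(\<lambda>x. f x y) = (\<lambda>x. G y * (indicator {y..L} x * sin (w*x)))"
      using True unfolding f_def by (auto simp: indicator_def)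
    then show ?thesis using True int_sin_Icc[of y L w] w by simp
  next
    case False
    then show ?thesis unfolding f_def G_def by simp
  qed
  have "(\<integral>x\<in>{0..L}. F x * sin (w*x) \<partial>lebesgue) = (\<integral>y. G y * ((cos (w*y) - cos (w*L)) / w) \<partial>lebesgue)"
    using Fub unfolding inner1 inner2 set_lebesgue_integral_def by simp
  also have "\<bar>\<dots>\<bar> \<le> (\<integral>y. norm (G y * ((cos (w*y) - cos (w*L)) / w)) \<partial>lebesgue)"
    using integral_norm_bound[of lebesgue "\<lambda>y. G y * ((cos (w*y) - cos (w*L)) / w)"] by simp
  also have "\<dots> \<le> (\<integral>y. \<bar>G y\<bar> * (2/w) \<partial>lebesgue)"
  proof (rule integral_mono')
    show "integrable lebesgue (\<lambda>y. \<bar>G y\<bar> * (2 / w))" using Gi by auto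
    fix y
    have "\<bar>cos (w*y) - cos (w*L)\<bar> \<le> 2"
      using abs_cos_le_one[of "w*y"] abs_cos_le_one[of "w*L"] by linarith
    then have "\<bar>(cos (w*y) - cos (w*L)) / w\<bar> \<le> 2/w" using w by (simp add: divide_right_mono)
    then have "\<bar>G y\<bar> * \<bar>(cos (w*y) - cos (w*L)) / w\<bar> \<le> \<bar>G y\<bar> * (2/w)" by (rule mult_left_mono) simp
    then show "norm (G y * ((cos (w*y) - cos (w*L)) / w)) \<le> \<bar>G y\<bar> * (2/w)"
      by (simp only: real_norm_def abs_mult)
    show "0 \<le> \<bar>G y\<bar> * (2/w)" using w by simp
  qed
  also have "\<dots> = 2/w * (\<integral>y\<in>{0..L}. \<bar>g y\<bar> \<partial>lebesgue)"
    unfolding G_def set_lebesgue_integral_def by (simp add: abs_mult mult.commute)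
  finally show ?thesis .
qed

lemma ibp:
  fixes f f' g g' :: "real \<Rightarrow> real" and a b :: real
  assumes ab: "a \<le> b"
    and df: "\<And>x. x\<in>{a..b} \<Longrightarrow> (f has_real_derivative f' x) (at x within {a..b})"
    and dg: "\<And>x. x\<in>{a..b} \<Longrightarrow> (g has_real_derivative g' x) (at x within {a..b})"
    and cg': "continuous_on {a..b} g'"
  shows "((\<lambda>x. f' x * g x) has_integral (f b * g b - f a * g a - integral {a..b} (\<lambda>x. f x * g' x))) {a..b}"
proof -
  have "((\<lambda>x. f' x * g x + f x * g' x) has_integral ((\<lambda>x. f x * g x) b - (\<lambda>x. f x * g x) a)) {a..b}"
    apply (rule fundamental_theorem_of_calculus[OF ab])
    unfolding has_real_derivative_iff_has_vector_derivative[symmetric]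
    using df dg by (auto intro!: derivative_eq_intros)
  moreover have "((\<lambda>x. f x * g' x) has_integral integral {a..b} (\<lambda>x. f x * g' x)) {a..b}"
    apply (rule integrable_integral, rule integrable_continuous_real)
    apply (rule continuous_on_mult[OF _ cg'])
    using DERIV_continuous_on[of "{a..b}" f f'] df by blast
  ultimately have "((\<lambda>x. (f' x * g x + f x * g' x) - f x * g' x) has_integral ((f b * g b - f a * g a) - integral {a..b} (\<lambda>x. f x * g' x))) {a..b}"
    by (rule has_integral_diff)
  then show ?thesis by simp
qed

lemma cos_step:
  fixes f f' :: "real \<Rightarrow> real" and L w :: real
  assumes L: "0 \<le> L" and w: "w \<noteq> 0" and s: "sin (w*L) = 0"
    and df: "\<And>x. x\<in>{0..L} \<Longrightarrow> (f has_real_derivative f' x) (at x within {0..L})"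
  shows "(\<lambda>x. f' x * sin (w*x)) integrable_on {0..L}"
    "integral {0..L} (\<lambda>x. f x * cos (w*x)) = -(1/w) * integral {0..L} (\<lambda>x. f' x * sin (w*x))"
proof -
  have h: "((\<lambda>x. f' x * (sin (w*x) / w)) has_integral
      (f L * (sin (w*L) / w) - f 0 * (sin (w*0) / w) - integral {0..L} (\<lambda>x. f x * cos (w*x)))) {0..L}"
    apply (rule ibp[OF L df])
     apply simp
    using w by (auto intro!: derivative_eq_intros continuous_intros)
  then have h2: "((\<lambda>x. f' x * (sin (w*x) / w)) has_integral (- integral {0..L} (\<lambda>x. f x * cos (w*x)))) {0..L}"
    using s by simp
  have "((\<lambda>x. w * (f' x * (sin (w*x) / w))) has_integral (w * (- integral {0..L} (\<lambda>x. f x * cos (w*x))))) {0..L}"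
    by (rule has_integral_mult_right[OF h2])
  then have h3: "((\<lambda>x. f' x * sin (w*x)) has_integral (w * (- integral {0..L} (\<lambda>x. f x * cos (w*x))))) {0..L}"
    using w by simp
  then show "(\<lambda>x. f' x * sin (w*x)) integrable_on {0..L}" by blast
  from h3 have e: "integral {0..L} (\<lambda>x. f' x * sin (w*x)) = w * (- integral {0..L} (\<lambda>x. f x * cos (w*x)))"
    by (rule integral_unique)
  show "integral {0..L} (\<lambda>x. f x * cos (w*x)) = -(1/w) * integral {0..L} (\<lambda>x. f' x * sin (w*x))"
    unfolding e using w by simp
qed

lemma sin_step:
  fixes f f' :: "real \<Rightarrow> real" and L w :: real
  assumes L: "0 \<le> L" and w: "w \<noteq> 0" and f0: "f 0 = 0" and fL: "f L = 0"
    and df: "\<And>x. x\<in>{0..L} \<Longrightarrow> (f has_real_derivative f' x) (at x within {0..L})"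
  shows "(\<lambda>x. f' x * cos (w*x)) integrable_on {0..L}"
    "integral {0..L} (\<lambda>x. f x * sin (w*x)) = (1/w) * integral {0..L} (\<lambda>x. f' x * cos (w*x))"
proof -
  have h: "((\<lambda>x. f' x * (- cos (w*x) / w)) has_integral
      (f L * (- cos (w*L) / w) - f 0 * (- cos (w*0) / w) - integral {0..L} (\<lambda>x. f x * sin (w*x)))) {0..L}"
    apply (rule ibp[OF L df])
     apply simp
    using w by (auto intro!: derivative_eq_intros continuous_intros)
  then have h2: "((\<lambda>x. f' x * (- cos (w*x) / w)) has_integral (- integral {0..L} (\<lambda>x. f x * sin (w*x)))) {0..L}"
    using f0 fL by simp
  have "((\<lambda>x. (-w) * (f' x * (- cos (w*x) / w))) has_integral ((-w) * (- integral {0..L} (\<lambda>x. f x * sin (w*x))))) {0..L}"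
    by (rule has_integral_mult_right[OF h2])
  then have h3: "((\<lambda>x. f' x * cos (w*x)) has_integral (w * integral {0..L} (\<lambda>x. f x * sin (w*x)))) {0..L}"
    using w by simp
  then show "(\<lambda>x. f' x * cos (w*x)) integrable_on {0..L}" by blast
  from h3 have e: "integral {0..L} (\<lambda>x. f' x * cos (w*x)) = w * integral {0..L} (\<lambda>x. f x * sin (w*x))"
    by (rule integral_unique)
  show "integral {0..L} (\<lambda>x. f x * sin (w*x)) = (1/w) * integral {0..L} (\<lambda>x. f' x * cos (w*x))"
    unfolding e using w by simp
qed

lemma alpha_bound:
  fixes L :: real and u0 :: "real \<Rightarrow> real"
  assumes L: "L > 0" and dom: "iter_dom_P L u0"
  shows "\<exists>K. \<forall>p\<ge>1. \<bar>alpha L u0 p\<bar> \<le> K / real p ^ 6"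
proof -
  obtain D where sr: "sobolev6_reps L u0 D" and bc: "D 1 0 = 0" "D 1 L = 0" "D 3 0 = 0" "D 3 L = 0"
      "D 5 0 = 0" "D 5 L = 0"
    using dom unfolding iter_dom_P_def by blast
  note sr' = sr[unfolded sobolev6_reps_def]
  have ae: "AE x in lebesgue. x \<in> {0..L} \<longrightarrow> u0 x = D 0 x" using sr' by blast
  have der: "\<And>k x. k < 5 \<Longrightarrow> x \<in> {0..L} \<Longrightarrow> (D k has_real_derivative D (Suc k) x) (at x within {0..L})"
    using sr' by blast
  have i6: "set_integrable lebesgue {0..L} (D 6)" using sr' by blast
  have D5: "\<And>x. x \<in> {0..L} \<Longrightarrow> D 5 x = D 5 0 + (\<integral>y\<in>{0..x}. D 6 y \<partial>lebesgue)"
    using sr' by blast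
  have d0: "\<And>x. x \<in> {0..L} \<Longrightarrow> (D 0 has_real_derivative D 1 x) (at x within {0..L})"
    using der[of 0] by (simp add: eval_nat_numeral)
  have d1: "\<And>x. x \<in> {0..L} \<Longrightarrow> (D 1 has_real_derivative D 2 x) (at x within {0..L})"
    using der[of 1] by (simp add: eval_nat_numeral)
  have d2: "\<And>x. x \<in> {0..L} \<Longrightarrow> (D 2 has_real_derivative D 3 x) (at x within {0..L})"
    using der[of 2] by (simp add: eval_nat_numeral)
  have d3: "\<And>x. x \<in> {0..L} \<Longrightarrow> (D 3 has_real_derivative D 4 x) (at x within {0..L})"
    using der[of 3] by (simp add: eval_nat_numeral)
  have d4: "\<And>x. x \<in> {0..L} \<Longrightarrow> (D 4 has_real_derivative D 5 x) (at x within {0..L})"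
    using der[of 4] by (simp add: eval_nat_numeral)
  define A where "A = (\<integral>y\<in>{0..L}. \<bar>D 6 y\<bar> \<partial>lebesgue)"
  have A0: "A \<ge> 0" unfolding A_def set_lebesgue_integral_def
    by (rule Bochner_Integration.integral_nonneg) (auto simp: indicator_def)
  define K where "K = 2 * sqrt 2 * A * L^5 / pi^6"
  have "\<bar>alpha L u0 p\<bar> \<le> K / real p ^ 6" if p: "p \<ge> 1" for p
  proof -
    define w where "w = real p * pi / L"
    have w0: "w > 0" using p L unfolding w_def by simp
    have sw: "sin (w*L) = 0" using L unfolding w_def by simp
    have c0: "continuous_on {0..L} (D 0)"
      by (rule DERIV_continuous_on[of _ _ "D 1"]) (rule d0)
    have cf: "cfun L p x = sqrt 2 * cos (w*x)" for x
      using p unfolding cfun_def w_def by (simp add: mult.commute mult.left_commute)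
    have phi: "set_integrable lebesgue {0..L} (\<lambda>x. D 0 x * cfun L p x)"
      unfolding cf by (rule absolutely_integrable_continuous_real) (auto intro!: continuous_intros c0)
    obtain N where N: "{x\<in>space lebesgue. \<not> (x \<in> {0..L} \<longrightarrow> u0 x = D 0 x)} \<subseteq> N" "N \<in> null_sets lebesgue"
      by (rule AE_E[OF ae]) (blast intro: null_setsI)
    have negN: "negligible N" using N(2) by (simp add: negligible_iff_null_sets)
    have eqN: "u0 x * cfun L p x = D 0 x * cfun L p x" if "x \<in> {0..L} - N" for x
      using that N(1) by auto
    have ui: "set_integrable lebesgue {0..L} (\<lambda>x. u0 x * cfun L p x)"
      by (rule absolutely_integrable_spike[OF phi negN eqN])
    have al: "alpha L u0 p = (1/L) * (sqrt 2 * integral {0..L} (\<lambda>x. D 0 x * cos (w*x)))"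
    proof -
      have "alpha L u0 p = (1/L) * integral {0..L} (\<lambda>x. u0 x * cfun L p x)"
        unfolding alpha_def using set_lebesgue_integral_eq_integral(2)[OF ui] by simp
      also have "integral {0..L} (\<lambda>x. u0 x * cfun L p x) = integral {0..L} (\<lambda>x. D 0 x * cfun L p x)"
        by (rule integral_spike[OF negN]) (simp add: eqN)
      also have "\<dots> = sqrt 2 * integral {0..L} (\<lambda>x. D 0 x * cos (w*x))"
      proof -
        have "(\<lambda>x. D 0 x * cfun L p x) = (\<lambda>x. sqrt 2 * (D 0 x * cos (w*x)))"
          by (rule ext) (simp add: cf algebra_simps)
        then show ?thesis by (simp only: integral_mult_right)
      qed
      finally show ?thesis .
    qed
    have L0: "0 \<le> L" using L by simp
    have wn: "w \<noteq> 0" using w0 by simp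
    have e1: "integral {0..L} (\<lambda>x. D 0 x * cos (w*x)) = -(1/w) * integral {0..L} (\<lambda>x. D 1 x * sin (w*x))"
      by (rule cos_step(2)[OF L0 wn sw]) (rule d0)
    have e2: "integral {0..L} (\<lambda>x. D 1 x * sin (w*x)) = (1/w) * integral {0..L} (\<lambda>x. D 2 x * cos (w*x))"
      by (rule sin_step(2)[OF L0 wn bc(1,2)]) (rule d1)
    have e3: "integral {0..L} (\<lambda>x. D 2 x * cos (w*x)) = -(1/w) * integral {0..L} (\<lambda>x. D 3 x * sin (w*x))"
      by (rule cos_step(2)[OF L0 wn sw]) (rule d2)
    have e4: "integral {0..L} (\<lambda>x. D 3 x * sin (w*x)) = (1/w) * integral {0..L} (\<lambda>x. D 4 x * cos (w*x))"
      by (rule sin_step(2)[OF L0 wn bc(3,4)]) (rule d3)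
    have e5: "integral {0..L} (\<lambda>x. D 4 x * cos (w*x)) = -(1/w) * integral {0..L} (\<lambda>x. D 5 x * sin (w*x))"
      by (rule cos_step(2)[OF L0 wn sw]) (rule d4)
    define J5 where "J5 = integral {0..L} (\<lambda>x. D 5 x * sin (w*x))"
    have I0: "integral {0..L} (\<lambda>x. D 0 x * cos (w*x)) = - J5 / w^5"
      unfolding e1 e2 e3 e4 e5 J5_def by (simp add: power_def field_simps)
    have D6int: "(D 6) integrable_on {0..L}" using set_lebesgue_integral_eq_integral(1)[OF i6] .
    have D5eq: "D 5 x = integral {0..x} (D 6)" if "x \<in> {0..L}" for x
    proof -
      have "set_integrable lebesgue {0..x} (D 6)"
        by (rule set_integrable_subset[OF i6]) (use that in auto)
      then show ?thesis using D5[OF that] bc(5) set_lebesgue_integral_eq_integral(2) by simp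
    qed
    have c5: "continuous_on {0..L} (D 5)"
      using continuous_on_eq[OF indefinite_integral_continuous_1[OF D6int]] D5eq by metis
    have si5: "set_integrable lebesgue {0..L} (\<lambda>x. D 5 x * sin (w*x))"
      by (rule absolutely_integrable_continuous_real) (auto intro!: continuous_intros c5)
    have "\<bar>(\<integral>x\<in>{0..L}. D 5 x * sin (w*x) \<partial>lebesgue)\<bar> \<le> 2/w * A"
      unfolding A_def by (rule fub[OF L0 w0 i6]) (use D5 bc(5) in simp)
    then have J5b: "\<bar>J5\<bar> \<le> 2/w * A"
      unfolding J5_def using set_lebesgue_integral_eq_integral(2)[OF si5] by simp
    have "\<bar>alpha L u0 p\<bar> = sqrt 2 / L * (\<bar>J5\<bar> / w^5)"
      unfolding al I0 using L w0 by (simp add: abs_mult)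
    also have "\<dots> \<le> sqrt 2 / L * ((2/w * A) / w^5)"
      using J5b L w0 by (intro mult_left_mono divide_right_mono) auto
    also have "\<dots> = K / real p ^ 6"
      unfolding K_def w_def using L p by (simp add: field_simps power_def)
    finally show ?thesis .
  qed
  then show ?thesis by blast
qed

definition gser :: "(nat \<Rightarrow> real) \<Rightarrow> (nat \<Rightarrow> real) \<Rightarrow> nat \<Rightarrow> real \<Rightarrow> real" where
  "gser a om k = (\<lambda>x. \<Sum>p. a p * om p ^ k * cos (om p * x + real k * pi / 2))"

lemma gser_summ:
  fixes a om :: "nat \<Rightarrow> real"
  assumes s0: "summable (\<lambda>p. \<bar>a p\<bar>)" and s4: "summable (\<lambda>p. \<bar>a p\<bar> * om p ^ 4)"
    and om: "\<And>p. om p \<ge> 0" and k: "k \<le> 4"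
  shows "summable (\<lambda>p. \<bar>a p\<bar> * om p ^ k)"
proof (rule summable_comparison_test'[where g="\<lambda>p. \<bar>a p\<bar> + \<bar>a p\<bar> * om p ^ 4"])
  show "summable (\<lambda>p. \<bar>a p\<bar> + \<bar>a p\<bar> * om p ^ 4)" using s0 s4 by (rule summable_add)
  fix p :: nat
  have "om p ^ k \<le> 1 + om p ^ 4"
  proof (cases "om p \<le> 1")
    case True
    then have "om p ^ k \<le> 1" using om by (simp add: power_le_one)
    then show ?thesis using om by (smt (verit) zero_le_power)
  next
    case False
    then have "om p ^ k \<le> om p ^ 4" using k by (intro power_increasing) auto
    then show ?thesis by simp
  qed
  then have "\<bar>a p\<bar> * om p ^ k \<le> \<bar>a p\<bar> * (1 + om p ^ 4)" by (rule mult_left_mono) simp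
  then show "norm (\<bar>a p\<bar> * om p ^ k) \<le> \<bar>a p\<bar> + \<bar>a p\<bar> * om p ^ 4"
    using om by (simp add: algebra_simps)
qed

lemma gser_deriv:
  fixes a om :: "nat \<Rightarrow> real"
  assumes s0: "summable (\<lambda>p. \<bar>a p\<bar>)" and s4: "summable (\<lambda>p. \<bar>a p\<bar> * om p ^ 4)"
    and om: "\<And>p. om p \<ge> 0" and k: "k < 4"
  shows "(gser a om k has_real_derivative gser a om (Suc k) x) (at x)"
proof -
  define f where "f n y = a n * om n ^ k * cos (om n * y + real k * pi / 2)" for n y
  define f' where "f' n y = a n * om n ^ Suc k * cos (om n * y + real (Suc k) * pi / 2)" for n y
  have sk: "summable (\<lambda>p. \<bar>a p\<bar> * om p ^ k)" by (rule gser_summ[OF s0 s4 om]) (use k in simp)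
  have sk1: "summable (\<lambda>p. \<bar>a p\<bar> * om p ^ Suc k)" by (rule gser_summ[OF s0 s4 om]) (use k in simp)
  have d: "(f n has_field_derivative f' n y) (at y within UNIV)" for n y
  proof -
    have "cos (om n * y + real (Suc k) * pi / 2) = - sin (om n * y + real k * pi / 2)"
    proof -
      have "om n * y + real (Suc k) * pi / 2 = (om n * y + real k * pi / 2) + pi / 2"
        by (simp add: algebra_simps add_divide_distrib)
      moreover have "\<And>\<theta>. cos (\<theta> + pi/2) = - sin \<theta>" by (simp add: cos_add)
      ultimately show ?thesis by metis
    qed
    then show ?thesis unfolding f_def f'_def
      by (auto intro!: derivative_eq_intros simp: algebra_simps)
  qed
  have uc: "uniformly_convergent_on UNIV (\<lambda>n y. \<Sum>i<n. f' i y)"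
  proof (rule Weierstrass_m_test'[OF _ sk1])
    fix n y
    show "norm (f' n y) \<le> \<bar>a n\<bar> * om n ^ Suc k"
      unfolding f'_def using om[of n] abs_cos_le_one[of "om n * y + real (Suc k) * pi / 2"]
      by (simp add: abs_mult mult_left_le del: power_Suc)
  qed
  have s0f: "summable (\<lambda>n. f n 0)"
  proof (rule summable_comparison_test'[OF sk])
    fix n show "norm (f n 0) \<le> \<bar>a n\<bar> * om n ^ k"
      unfolding f_def using om[of n] abs_cos_le_one[of "real k * pi / 2"]
      by (simp add: abs_mult mult_left_le)
  qed
  have "((\<lambda>x. \<Sum>n. f n x) has_field_derivative (\<Sum>n. f' n x)) (at x)"
    by (rule has_field_derivative_series'(2)[OF convex_UNIV d uc _ s0f]) auto
  then show ?thesis unfolding gser_def f_def f'_def .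
qed

lemma gser_funpow:
  fixes a om :: "nat \<Rightarrow> real"
  assumes s0: "summable (\<lambda>p. \<bar>a p\<bar>)" and s4: "summable (\<lambda>p. \<bar>a p\<bar> * om p ^ 4)"
    and om: "\<And>p. om p \<ge> 0"
  shows "k \<le> 4 \<Longrightarrow> (deriv ^^ k) (gser a om 0) = gser a om k"
proof (induction k)
  case 0 then show ?case by simp
next
  case (Suc k)
  then have "(deriv ^^ Suc k) (gser a om 0) = deriv (gser a om k)" by simp
  also have "\<dots> = gser a om (Suc k)"
    using gser_deriv[OF s0 s4 om, of k] Suc.prems by (auto intro!: ext DERIV_imp_deriv)
  finally show ?case .
qed

lemma gser_bound:
  fixes a om :: "nat \<Rightarrow> real"
  assumes s4: "summable (\<lambda>p. \<bar>a p\<bar> * om p ^ 4)" and om: "\<And>p. om p \<ge> 0"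
  shows "\<bar>gser a om 4 x\<bar> \<le> (\<Sum>p. \<bar>a p\<bar> * om p ^ 4)"
proof -
  have b: "\<bar>a p * om p ^ 4 * cos (om p * x + real 4 * pi / 2)\<bar> \<le> \<bar>a p\<bar> * om p ^ 4" for p
    using om[of p] abs_cos_le_one[of "om p * x + real 4 * pi / 2"]
    by (simp add: abs_mult mult_left_le)
  have sa: "summable (\<lambda>p. \<bar>a p * om p ^ 4 * cos (om p * x + real 4 * pi / 2)\<bar>)"
    by (rule summable_comparison_test'[OF s4]) (use b in simp)
  have "\<bar>gser a om 4 x\<bar> \<le> (\<Sum>p. \<bar>a p * om p ^ 4 * cos (om p * x + real 4 * pi / 2)\<bar>)"
    unfolding gser_def by (rule summable_rabs[OF sa])
  also have "\<dots> \<le> (\<Sum>p. \<bar>a p\<bar> * om p ^ 4)"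
    by (rule suminf_le[OF b sa s4])
  finally show ?thesis .
qed

lemma LBINT_bound:
  fixes h :: "real \<Rightarrow> real"
  assumes hb: "\<And>s. s \<in> {0..1} \<Longrightarrow> \<bar>h s\<bar> \<le> B"
  shows "\<bar>LBINT s=0..1. h s\<bar> \<le> B"
proof -
  have B0: "0 \<le> B" using hb[of 0] by simp
  have "(LBINT s=0..1. h s) = (\<integral>s. indicator {0..1} s *\<^sub>R h s \<partial>lborel)"
    using interval_integral_Icc[of 0 1 h] by (simp add: set_lebesgue_integral_def zero_ereal_def one_ereal_def)
  also have "\<bar>\<dots>\<bar> \<le> (\<integral>s. norm (indicator {0..1} s *\<^sub>R h s) \<partial>lborel)"
    using integral_norm_bound[of lborel "\<lambda>s. indicator {0..1} s *\<^sub>R h s"] by simp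
  also have "\<dots> \<le> (\<integral>s. B * indicator {0..1::real} s \<partial>lborel)"
  proof (rule Bochner_Integration.integral_mono')
    show "integrable lborel (\<lambda>s. B * indicat_real {0..1::real} s)" by (intro integrable_mult_right integrable_real_indicator) auto
    fix s
    show "norm (indicat_real {0..1::real} s *\<^sub>R h s) \<le> B * indicat_real {0..1::real} s"
      using hb[of s] by (auto simp: indicator_def)
    show "0 \<le> B * indicat_real {0..1} s" using B0 by simp
  qed
  also have "\<dots> = B" by simp
  finally show ?thesis .
qed

lemma L2delta_bound:
  assumes b: "\<And>y. \<bar>(deriv ^^ 4) w y\<bar> \<le> B"
  shows "\<bar>L2delta J dx w j\<bar> \<le> B / 3"
proof -
  have B0: "0 \<le> B" using b[of 0] by linarith
  have i1: "\<bar>LBINT s=0..1. (1 - s)^3 * (deriv ^^ 4) w (real j * dx + s * dx)\<bar> \<le> B"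
  proof (rule LBINT_bound)
    fix s :: real assume s: "s \<in> {0..1}"
    have "\<bar>(1 - s)^3\<bar> \<le> 1" using s by (auto simp: abs_le_iff power_le_one)
    then show "\<bar>(1 - s)^3 * (deriv ^^ 4) w (real j * dx + s * dx)\<bar> \<le> B"
      unfolding abs_mult using mult_mono[OF _ b, of "\<bar>(1 - s)^3\<bar>" 1] by simp
  qed
  have i2: "\<bar>LBINT s=0..1. (s - 1)^3 * (deriv ^^ 4) w (real j * dx - s * dx)\<bar> \<le> B"
  proof (rule LBINT_bound)
    fix s :: real assume s: "s \<in> {0..1}"
    have "\<bar>(s - 1)^3\<bar> = \<bar>s - 1\<bar>^3" by (simp add: power_abs)
    also have "\<dots> \<le> 1" by (rule power_le_one) (use s in auto)
    finally have "\<bar>(s - 1)^3\<bar> \<le> 1" .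
    then show "\<bar>(s - 1)^3 * (deriv ^^ 4) w (real j * dx - s * dx)\<bar> \<le> B"
      unfolding abs_mult using mult_mono[OF _ b, of "\<bar>(s - 1)^3\<bar>" 1] by simp
  qed
  show ?thesis unfolding L2delta_def using i1 i2 B0 by (auto simp: abs_mult)
qed

lemma l2norm_L2: "l2norm J v = sqrt (1 / real J) * L2_set v {..<J}"
  unfolding l2norm_def L2_set_def by (subst real_sqrt_mult[symmetric]) simp

lemma l2norm_nonneg: "0 \<le> l2norm J v"
  unfolding l2norm_def by (simp add: sum_nonneg)

lemma l2norm_add: "l2norm J (\<lambda>j. v j + w j) \<le> l2norm J v + l2norm J w"
  unfolding l2norm_L2 using L2_set_triangle_ineq[of v w "{..<J}"]
  by (simp add: distrib_left[symmetric] mult_left_mono)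

lemma l2norm_zero: "l2norm J (\<lambda>j. 0) = 0"
  unfolding l2norm_def by simp

lemma l2norm_sum:
  assumes "finite K"
  shows "l2norm J (\<lambda>j. \<Sum>k\<in>K. V k j) \<le> (\<Sum>k\<in>K. l2norm J (V k))"
  using assms
proof (induction K rule: finite_induct)
  case empty then show ?case by (simp add: l2norm_zero)
next
  case (insert k K)
  have "l2norm J (\<lambda>j. \<Sum>k\<in>insert k K. V k j) = l2norm J (\<lambda>j. V k j + (\<Sum>k\<in>K. V k j))"
    using insert by simp
  also have "\<dots> \<le> l2norm J (V k) + l2norm J (\<lambda>j. \<Sum>k\<in>K. V k j)"
    using l2norm_add[of J "V k"] by simp
  also have "\<dots> \<le> l2norm J (V k) + (\<Sum>k\<in>K. l2norm J (V k))" using insert by simp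
  finally show ?case using insert by simp
qed

lemma l2norm_scale: "l2norm J (\<lambda>j. c * v j) = \<bar>c\<bar> * l2norm J v"
proof -
  have "(\<Sum>j<J. (c * v j)^2) = c^2 * (\<Sum>j<J. (v j)^2)"
    by (simp add: power_mult_distrib sum_distrib_left)
  then show ?thesis
    by (simp only: l2norm_def mult.left_commute[of "1 / real J" "c^2"] real_sqrt_mult real_sqrt_abs)
qed

lemma l2norm_cong: "(\<And>j. j < J \<Longrightarrow> v j = w j) \<Longrightarrow> l2norm J v = l2norm J w"
  unfolding l2norm_def by simp

lemma l2norm_sup:
  assumes J: "J > 0" and b: "\<And>j. j < J \<Longrightarrow> \<bar>v j\<bar> \<le> B"
  shows "l2norm J v \<le> B"
proof -
  have B0: "0 \<le> B" using b[of 0] J by linarith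
  have "(\<Sum>j<J. (v j)^2) \<le> (\<Sum>j<J. B^2)"
    by (rule sum_mono) (metis b B0 abs_le_square_iff abs_of_nonneg lessThan_iff)
  moreover have "(\<Sum>j<J. B^2) = real J * B^2" by simp
  ultimately have "1 / real J * (\<Sum>j<J. (v j)^2) \<le> B^2"
    using J by (simp add: field_simps)
  then have "l2norm J v \<le> sqrt (B^2)" unfolding l2norm_def by (rule real_sqrt_le_mono)
  then show ?thesis using B0 by simp
qed

lemma step_sq:
  fixes v :: "nat \<Rightarrow> real"
  assumes J: "J \<ge> 2" and dx: "dx > 0" and dt: "0 \<le> dt" and cfl: "dt / dx^2 \<le> 1/2"
  shows "(\<Sum>j<J. (scheme_step J dx dt v j)^2) \<le> (\<Sum>j<J. (v j)^2)"
proof -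
  define N where "N = J - 1"
  have JN: "J = Suc N" and N1: "N \<ge> 1" using J unfolding N_def by auto
  define r where "r = dt / dx^2"
  have r0: "0 \<le> r" and r1: "r \<le> 1/2" using dt dx cfl unfolding r_def by auto
  define d where "d i = v (Suc i) - v i" for i
  define E where "E j = (if j < N then d j else 0)" for j
  define E' where "E' j = (if 0 < j then d (j - 1) else 0)" for j
  define q where "q j = E j - E' j" for j
  have step: "scheme_step J dx dt v j = v j + r * q j" if j: "j < J" for j
  proof -
    have "Pdelta J dx v j = q j / dx^2"
    proof (cases "j = 0")
      case True then show ?thesis using N1 unfolding Pdelta_def q_def E_def E'_def d_def by simp
    next
      case False
      show ?thesis
      proof (cases "j = N")
        case True
        then have "J - 2 = N - 1" "J - 1 = N" using JN by auto
        moreover have "Suc (N - 1) = N" using N1 by simp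
        ultimately show ?thesis using False True unfolding Pdelta_def q_def E_def E'_def d_def
          by (simp add: JN)
      next
        case False2: False
        then have "j < N" "j \<noteq> J - 1" using j JN by auto
        moreover have "Suc (j - 1) = j" using False by simp
        ultimately show ?thesis using False unfolding Pdelta_def q_def E_def E'_def d_def
          by (simp add: algebra_simps)
      qed
    qed
    then show ?thesis unfolding scheme_step_def r_def by simp
  qed
  define D where "D = (\<Sum>i<N. (d i)^2)"
  have D0: "0 \<le> D" unfolding D_def by (simp add: sum_nonneg)
  have s1: "(\<Sum>j<J. v j * E j) = (\<Sum>i<N. v i * d i)"
    unfolding JN E_def by simp
  have s2: "(\<Sum>j<J. v j * E' j) = (\<Sum>i<N. v (Suc i) * d i)"
    unfolding JN E'_def by (subst sum.lessThan_Suc_shift) simp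
  have vq: "(\<Sum>j<J. v j * q j) = - D"
  proof -
    have "(\<Sum>j<J. v j * q j) = (\<Sum>j<J. v j * E j) - (\<Sum>j<J. v j * E' j)"
      unfolding q_def by (simp add: algebra_simps sum_subtractf)
    also have "\<dots> = (\<Sum>i<N. (v i - v (Suc i)) * d i)"
      unfolding s1 s2 by (simp add: algebra_simps sum_subtractf)
    also have "\<dots> = - D" unfolding D_def d_def
      by (simp add: sum_negf[symmetric] power2_eq_square algebra_simps)
    finally show ?thesis .
  qed
  have e1: "(\<Sum>j<J. (E j)^2) = D" unfolding JN E_def D_def by simp
  have e2: "(\<Sum>j<J. (E' j)^2) = D" unfolding JN E'_def D_def by (subst sum.lessThan_Suc_shift) simp
  have qq: "(\<Sum>j<J. (q j)^2) \<le> 4 * D"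
  proof -
    have "(\<Sum>j<J. (q j)^2) \<le> (\<Sum>j<J. 2 * (E j)^2 + 2 * (E' j)^2)"
    proof (rule sum_mono)
      fix j
      have "0 \<le> (E j + E' j)^2" by simp
      then show "(q j)^2 \<le> 2 * (E j)^2 + 2 * (E' j)^2"
        unfolding q_def by (simp add: power2_eq_square algebra_simps)
    qed
    also have "\<dots> = 4 * D" using e1 e2 by (simp add: sum.distrib sum_distrib_left[symmetric])
    finally show ?thesis .
  qed
  have "(\<Sum>j<J. (scheme_step J dx dt v j)^2) = (\<Sum>j<J. (v j + r * q j)^2)"
    using step by simp
  also have "\<dots> = (\<Sum>j<J. (v j)^2) + 2 * r * (\<Sum>j<J. v j * q j) + r^2 * (\<Sum>j<J. (q j)^2)"
    by (simp add: power2_eq_square algebra_simps sum.distrib sum_distrib_left)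
  also have "\<dots> \<le> (\<Sum>j<J. (v j)^2) + 2 * r * (- D) + r^2 * (4 * D)"
    unfolding vq using qq by (simp add: mult_left_mono)
  also have "\<dots> = (\<Sum>j<J. (v j)^2) - 2 * r * D * (1 - 2 * r)"
    by (simp add: power2_eq_square algebra_simps)
  also have "\<dots> \<le> (\<Sum>j<J. (v j)^2)"
    using r0 r1 D0 by simp
  finally show ?thesis .
qed

lemma step_stable:
  assumes J: "J \<ge> 2" and dx: "dx > 0" and dt: "0 \<le> dt" and cfl: "dt / dx^2 \<le> 1/2"
  shows "l2norm J ((scheme_step J dx dt ^^ m) v) \<le> l2norm J v"
proof (induction m)
  case 0 then show ?case by simp
next
  case (Suc m)
  have "l2norm J ((scheme_step J dx dt ^^ Suc m) v) = l2norm J (scheme_step J dx dt ((scheme_step J dx dt ^^ m) v))"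
    by simp
  also have "\<dots> \<le> l2norm J ((scheme_step J dx dt ^^ m) v)"
    unfolding l2norm_def using step_sq[OF J dx dt cfl]
    by (intro real_sqrt_le_mono mult_left_mono) auto
  finally show ?case using Suc by simp
qed

lemma alpha_summable:
  fixes L :: real and u0 :: "real \<Rightarrow> real"
  assumes L: "L > 0" and dom: "iter_dom_P L u0"
  shows "summable (\<lambda>p. \<bar>alpha L u0 (Suc p)\<bar> * real (Suc p) ^ 4)"
proof -
  obtain K where K: "\<And>p. p \<ge> 1 \<Longrightarrow> \<bar>alpha L u0 p\<bar> \<le> K / real p ^ 6"
    using alpha_bound[OF L dom] by blast
  have si: "summable (\<lambda>n. inverse (real n ^ 2))" by (rule inverse_power_summable) simp
  then have si': "summable (\<lambda>n. K * inverse (real (Suc n) ^ 2))"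
    by (subst summable_Suc_iff) (rule summable_mult)
  show ?thesis
  proof (rule summable_comparison_test'[OF si'])
    fix n
    have "\<bar>alpha L u0 (Suc n)\<bar> * real (Suc n) ^ 4 \<le> K / real (Suc n) ^ 6 * real (Suc n) ^ 4"
      by (rule mult_right_mono[OF K]) auto
    also have "\<dots> = K * inverse (real (Suc n) ^ 2)"
      proof -
      have gen: "K / m^6 * m^4 = K * inverse (m^2)" if m: "m > 0" for m :: real
      proof -
        have "m^6 = m^4 * m^2" by (simp flip: power_add)
        then show ?thesis using m by (simp add: field_simps)
      qed
      show ?thesis by (rule gen) simp
    qed
    finally show "norm (\<bar>alpha L u0 (Suc n)\<bar> * real (Suc n) ^ 4) \<le> K * inverse (real (Suc n) ^ 2)"
      by simp
  qed
qed

lemma heat_d4: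
  fixes L t :: real and u0 :: "real \<Rightarrow> real"
  assumes L: "L > 0" and t: "0 \<le> t" and sa: "summable (\<lambda>p. \<bar>alpha L u0 p\<bar> * real p ^ 4)"
  shows "\<bar>(deriv ^^ 4) (heat_sol L u0 t) y\<bar> \<le>
     (\<Sum>p. sqrt 2 * (pi / L)^4 * (\<bar>alpha L u0 p\<bar> * real p ^ 4) * exp (- ((real p)^2 * pi^2 * t / L^2)))"
proof -
  define om where "om p = real p * pi / L" for p
  define e where "e p = exp (- ((real p)^2 * pi^2 * t / L^2))" for p
  define a where "a p = alpha L u0 p * e p * (if p = 0 then 1 else sqrt 2)" for p
  define F where "F p = sqrt 2 * (pi / L)^4 * (\<bar>alpha L u0 p\<bar> * real p ^ 4) * e p" for p
  have om0: "om p \<ge> 0" for p unfolding om_def using L by simp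
  have e1: "0 < e p" "e p \<le> 1" for p unfolding e_def using L t by auto
  have hs: "heat_sol L u0 t = gser a om 0"
    unfolding heat_sol_def gser_def
  proof (rule ext, rule arg_cong[where f=suminf], rule ext)
    fix x p
    show "alpha L u0 p * exp (- ((real p)^2 * pi^2 * t / L^2)) * cfun L p x =
          a p * om p ^ 0 * cos (om p * x + real 0 * pi / 2)"
      unfolding a_def e_def cfun_def om_def by simp
  qed
  have sab: "summable (\<lambda>p. \<bar>alpha L u0 p\<bar>)"
  proof -
    have "summable (\<lambda>p. \<bar>alpha L u0 (Suc p)\<bar>)"
    proof (rule summable_comparison_test'[where g="\<lambda>p. \<bar>alpha L u0 (Suc p)\<bar> * real (Suc p) ^ 4"])
      show "summable (\<lambda>p. \<bar>alpha L u0 (Suc p)\<bar> * real (Suc p) ^ 4)"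
        using sa by (subst summable_Suc_iff)
      fix n
      have "1 \<le> real (Suc n) ^ 4" by simp
      then show "norm \<bar>alpha L u0 (Suc n)\<bar> \<le> \<bar>alpha L u0 (Suc n)\<bar> * real (Suc n) ^ 4"
        using mult_left_mono[of 1 "real (Suc n) ^ 4" "\<bar>alpha L u0 (Suc n)\<bar>"] by simp
    qed
    then show ?thesis by (subst (asm) summable_Suc_iff)
  qed
  have s0: "summable (\<lambda>p. \<bar>a p\<bar>)"
  proof (rule summable_comparison_test'[where g="\<lambda>p. sqrt 2 * \<bar>alpha L u0 p\<bar>"])
    show "summable (\<lambda>p. sqrt 2 * \<bar>alpha L u0 p\<bar>)" using sab by (rule summable_mult)
    fix n :: nat
    have "\<bar>(if n = 0 then 1 else sqrt 2)\<bar> \<le> sqrt 2" by simp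
    moreover have "\<bar>e n\<bar> \<le> 1" using e1[of n] by simp
    ultimately have "\<bar>alpha L u0 n\<bar> * (\<bar>e n\<bar> * \<bar>(if n = 0 then 1 else sqrt 2)\<bar>) \<le> \<bar>alpha L u0 n\<bar> * (1 * sqrt 2)"
      by (intro mult_left_mono mult_mono) auto
    then show "norm \<bar>a n\<bar> \<le> sqrt 2 * \<bar>alpha L u0 n\<bar>"
      unfolding a_def by (simp add: abs_mult mult_ac)
  qed
  have aF: "\<bar>a p\<bar> * om p ^ 4 = F p" for p
  proof (cases "p = 0")
    case True then show ?thesis unfolding a_def om_def F_def by simp
  next
    case False
    then show ?thesis unfolding a_def om_def F_def using e1[of p] L
      by (simp add: abs_mult power_divide power_mult_distrib mult_ac)
  qed
  have sF: "summable F"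
  proof (rule summable_comparison_test'[where g="\<lambda>p. sqrt 2 * (pi / L)^4 * (\<bar>alpha L u0 p\<bar> * real p ^ 4)"])
    show "summable (\<lambda>p. sqrt 2 * (pi / L)^4 * (\<bar>alpha L u0 p\<bar> * real p ^ 4))"
      using sa by (rule summable_mult)
    fix n
    show "norm (F n) \<le> sqrt 2 * (pi / L)^4 * (\<bar>alpha L u0 n\<bar> * real n ^ 4)"
      unfolding F_def using e1[of n] L
      by (simp add: abs_mult mult_left_le)
  qed
  have s4: "summable (\<lambda>p. \<bar>a p\<bar> * om p ^ 4)" unfolding aF using sF .
  have "(deriv ^^ 4) (heat_sol L u0 t) = gser a om 4"
    unfolding hs by (rule gser_funpow[OF s0 s4 om0]) simp
  then have "\<bar>(deriv ^^ 4) (heat_sol L u0 t) y\<bar> \<le> (\<Sum>p. \<bar>a p\<bar> * om p ^ 4)"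
    using gser_bound[OF s4 om0] by simp
  then show ?thesis unfolding aF F_def e_def .
qed

lemma geom_bound:
  fixes lam dt :: real and n :: nat
  assumes lam: "lam > 0" and dt: "0 < dt" "dt < 1"
  shows "dt * (\<Sum>k<n. exp (- (lam * dt)) ^ k) \<le> 1 + 1 / lam"
proof -
  define x where "x = lam * dt"
  have x0: "x > 0" unfolding x_def using lam dt by simp
  define q where "q = exp (- x)"
  have q0: "0 < q" "q < 1" unfolding q_def using x0 by auto
  have "(\<Sum>k<n. q ^ k) = (1 - q ^ n) / (1 - q)" using q0 by (simp add: sum_gp_strict)
  also have "\<dots> \<le> 1 / (1 - q)" using q0 by (intro divide_right_mono) auto
  finally have s: "(\<Sum>k<n. q ^ k) \<le> 1 / (1 - q)" .
  have "1 + x \<le> exp x" by simp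
  then have "exp (-x) * (1 + x) \<le> exp (-x) * exp x" by (rule mult_left_mono) simp
  then have "q * (1 + x) \<le> 1" unfolding q_def by (simp add: exp_minus_inverse mult.commute)
  then have "x \<le> (1 + x) * (1 - q)" by (simp add: algebra_simps)
  then have "1 / (1 - q) \<le> (1 + x) / x" using q0 x0 by (simp add: field_simps)
  with s have "(\<Sum>k<n. q ^ k) \<le> (1 + x) / x" by linarith
  then have "dt * (\<Sum>k<n. q ^ k) \<le> dt * ((1 + x) / x)" by (rule mult_left_mono) (use dt in auto)
  also have "\<dots> = 1 / lam + dt" unfolding x_def using lam dt by (simp add: field_simps)
  also have "\<dots> \<le> 1 + 1 / lam" using dt by simp
  finally show ?thesis unfolding q_def x_def .
qed

lemma time_sum_bound:
  fixes L dt :: real and n :: nat and c :: "nat \<Rightarrow> real"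
  assumes L: "L > 0" and dt: "0 < dt" "dt < 1" and c0: "\<And>p. c p \<ge> 0" and c00: "c 0 = 0"
    and sc: "summable c"
  shows "dt * (\<Sum>k<n. (\<Sum>p. c p * exp (- ((real p)^2 * pi^2 * (real k * dt) / L^2))))
         \<le> (1 + L^2 / pi^2) * (\<Sum>p. c p)"
proof -
  define lam where "lam p = (real p)^2 * pi^2 / L^2" for p
  define T where "T p k = c p * exp (- (lam p * dt)) ^ k" for p k
  have Teq: "c p * exp (- ((real p)^2 * pi^2 * (real k * dt) / L^2)) = T p k" for p k
  proof -
    have eq: "- ((real p)^2 * pi^2 * (real k * dt) / L^2) = real k * (- (lam p * dt))"
      unfolding lam_def by (simp add: algebra_simps)
    show ?thesis unfolding T_def exp_of_nat_mult[symmetric] eq ..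
  qed
  have lam0: "lam p \<ge> 0" for p unfolding lam_def by simp
  have Tb: "\<bar>T p k\<bar> \<le> c p" for p k
  proof -
    have "exp (- (lam p * dt)) ^ k \<le> 1"
      using lam0[of p] dt by (intro power_le_one) auto
    then show ?thesis unfolding T_def using c0[of p] by (simp add: abs_mult mult_left_le)
  qed
  have sT: "summable (\<lambda>p. T p k)" for k
    by (rule summable_comparison_test'[OF sc]) (use Tb in simp)
  have "dt * (\<Sum>k<n. (\<Sum>p. c p * exp (- ((real p)^2 * pi^2 * (real k * dt) / L^2))))
      = dt * (\<Sum>k<n. (\<Sum>p. T p k))" unfolding Teq ..
  also have "(\<Sum>k<n. (\<Sum>p. T p k)) = (\<Sum>p. (\<Sum>k<n. T p k))"
    by (rule suminf_sum[symmetric]) (rule sT)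
  also have "dt * (\<Sum>p. (\<Sum>k<n. T p k)) = (\<Sum>p. dt * (\<Sum>k<n. T p k))"
    by (rule suminf_mult[symmetric]) (rule summable_sum, rule sT)
  also have "\<dots> \<le> (\<Sum>p. (1 + L^2 / pi^2) * c p)"
  proof (rule suminf_le)
    show "summable (\<lambda>p. dt * (\<Sum>k<n. T p k))" by (rule summable_mult, rule summable_sum, rule sT)
    show "summable (\<lambda>p. (1 + L^2 / pi^2) * c p)" by (rule summable_mult[OF sc])
    fix p
    show "dt * (\<Sum>k<n. T p k) \<le> (1 + L^2 / pi^2) * c p"
    proof (cases "p = 0")
      case True then show ?thesis unfolding T_def using c00 by simp
    next
      case False
      have lp: "lam p \<ge> pi^2 / L^2"
      proof -
        have "(1::real) \<le> (real p)^2" using False by simp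
        then have "1 * (pi^2 / L^2) \<le> (real p)^2 * (pi^2 / L^2)" by (rule mult_right_mono) simp
        then show ?thesis unfolding lam_def by simp
      qed
      have lpos: "lam p > 0" using lp L by (smt (verit) divide_pos_pos pi_gt_zero zero_less_power)
      have "dt * (\<Sum>k<n. T p k) = c p * (dt * (\<Sum>k<n. exp (- (lam p * dt)) ^ k))"
        unfolding T_def by (simp add: sum_distrib_left mult_ac)
      also have "\<dots> \<le> c p * (1 + 1 / lam p)"
        by (rule mult_left_mono[OF geom_bound[OF lpos dt] c0])
      also have "1 / lam p \<le> L^2 / pi^2"
      proof -
        have "1 / lam p \<le> 1 / (pi^2 / L^2)"
          using lp L lpos by (intro divide_left_mono) (auto intro!: mult_pos_pos)
        then show ?thesis by simp
      qed
      then have "c p * (1 + 1 / lam p) \<le> c p * (1 + L^2 / pi^2)"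
        using c0[of p] by (intro mult_left_mono) auto
      finally show ?thesis by (simp add: mult.commute)
    qed
  qed
  also have "\<dots> = (1 + L^2 / pi^2) * (\<Sum>p. c p)" by (rule suminf_mult[OF sc])
  finally show ?thesis .
qed

theorem proposition3p6:
  fixes L :: real
  assumes "L > 0"
  shows "\<exists>C>0. \<forall>(u0::real \<Rightarrow> real) (dt::real) (J::nat) (n::nat).
     H6 L u0 \<and> iter_dom_P L u0 \<and> 0 < dt \<and> dt < 1 \<and> 2 \<le> J \<and>
     dt / (L / (real J - 1))^2 \<le> 1/2 \<and> 1 \<le> n \<longrightarrow>
     l2norm J (\<lambda>j. dt * (\<Sum>k<n.
        ((scheme_step J (L / (real J - 1)) dt) ^^ (n - 1 - k))
          (\<lambda>i. (L / (real J - 1))^2 *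
               L2delta J (L / (real J - 1)) (heat_sol L u0 (real k * dt)) i) j))
     \<le> C * (L / (real J - 1))^2 * (\<Sum>p. \<bar>alpha L u0 (Suc p)\<bar> * (real (Suc p))^4)"
proof -
  have L: "L > 0" by fact
  define c4 where "c4 = sqrt 2 * (pi / L)^4"
  define Kt where "Kt = 1 + L^2 / pi^2"
  define C where "C = c4 * Kt / 3"
  have c40: "c4 > 0" unfolding c4_def using L by simp
  have Kt0: "Kt > 0" unfolding Kt_def by (simp add: add_pos_nonneg)
  have C0: "C > 0" unfolding C_def using c40 Kt0 by simp
  show ?thesis
  proof (rule exI[of _ C], intro conjI allI impI C0)
    fix u0 :: "real \<Rightarrow> real" and dt :: real and J n :: nat
    assume H: "H6 L u0 \<and> iter_dom_P L u0 \<and> 0 < dt \<and> dt < 1 \<and> 2 \<le> J \<and>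
     dt / (L / (real J - 1))^2 \<le> 1/2 \<and> 1 \<le> n"
    then have dom: "iter_dom_P L u0" and dt0: "0 < dt" and dt1: "dt < 1" and J2: "2 \<le> J"
      and cfl0: "dt / (L / (real J - 1))^2 \<le> 1/2" by auto
    define dx where "dx = L / (real J - 1)"
    have cfl: "dt / dx^2 \<le> 1/2" using cfl0 unfolding dx_def .
    have dx0: "dx > 0" unfolding dx_def using L J2 by simp
    have J0: "J > 0" using J2 by simp
    define S where "S = (\<Sum>p. \<bar>alpha L u0 (Suc p)\<bar> * real (Suc p) ^ 4)"
    have sS: "summable (\<lambda>p. \<bar>alpha L u0 (Suc p)\<bar> * real (Suc p) ^ 4)"
      by (rule alpha_summable[OF L dom])
    have sa: "summable (\<lambda>p. \<bar>alpha L u0 p\<bar> * real p ^ 4)"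
      using sS by (subst (asm) summable_Suc_iff)
    have Seq: "(\<Sum>p. \<bar>alpha L u0 p\<bar> * real p ^ 4) = S"
      unfolding S_def using suminf_split_head[OF sa] by simp
    define M where "M t = (\<Sum>p. c4 * (\<bar>alpha L u0 p\<bar> * real p ^ 4) * exp (- ((real p)^2 * pi^2 * t / L^2)))" for t
    have Mb: "\<bar>(deriv ^^ 4) (heat_sol L u0 t) y\<bar> \<le> M t" if "t \<ge> 0" for t y
      unfolding M_def c4_def by (rule heat_d4[OF L that sa])
    define w where "w k = (\<lambda>i. dx^2 * L2delta J dx (heat_sol L u0 (real k * dt)) i)" for k
    have wb: "l2norm J (w k) \<le> dx^2 * (M (real k * dt) / 3)" for k
    proof -
      have "l2norm J (w k) = \<bar>dx^2\<bar> * l2norm J (L2delta J dx (heat_sol L u0 (real k * dt)))"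
        unfolding w_def by (rule l2norm_scale)
      also have "l2norm J (L2delta J dx (heat_sol L u0 (real k * dt))) \<le> M (real k * dt) / 3"
        by (rule l2norm_sup[OF J0], rule L2delta_bound, rule Mb) (use dt0 in simp)
      then have "dx^2 * l2norm J (L2delta J dx (heat_sol L u0 (real k * dt))) \<le> dx^2 * (M (real k * dt) / 3)"
        by (rule mult_left_mono) simp
      then have "\<bar>dx^2\<bar> * l2norm J (L2delta J dx (heat_sol L u0 (real k * dt))) \<le> dx^2 * (M (real k * dt) / 3)"
        by simp
      finally show ?thesis .
    qed
    define V where "V k = (scheme_step J dx dt ^^ (n - 1 - k)) (w k)" for k
    have "l2norm J (\<lambda>j. dt * (\<Sum>k<n. V k j)) = \<bar>dt\<bar> * l2norm J (\<lambda>j. \<Sum>k<n. V k j)"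
      by (rule l2norm_scale)
    also have "\<dots> \<le> dt * (\<Sum>k<n. l2norm J (V k))"
      using l2norm_sum[of "{..<n}" J V] dt0 by (simp add: mult_left_mono)
    also have "\<dots> \<le> dt * (\<Sum>k<n. dx^2 * (M (real k * dt) / 3))"
    proof (rule mult_left_mono[OF sum_mono])
      fix k
      show "l2norm J (V k) \<le> dx^2 * (M (real k * dt) / 3)"
        unfolding V_def using step_stable[OF J2 dx0 _ cfl, of "n - 1 - k" "w k"] dt0 wb[of k] by simp
    qed (use dt0 in simp)
    also have "\<dots> = dx^2 / 3 * (dt * (\<Sum>k<n. M (real k * dt)))"
      by (simp add: sum_distrib_left sum_divide_distrib mult_ac)
    also have "dt * (\<Sum>k<n. M (real k * dt)) \<le> Kt * (\<Sum>p. c4 * (\<bar>alpha L u0 p\<bar> * real p ^ 4))"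
      unfolding M_def Kt_def
      by (rule time_sum_bound[OF L dt0 dt1]) (use c40 sa in \<open>auto intro: summable_mult\<close>)
    also have "(\<Sum>p. c4 * (\<bar>alpha L u0 p\<bar> * real p ^ 4)) = c4 * S"
      using suminf_mult[OF sa, of c4] Seq by simp
    finally have "l2norm J (\<lambda>j. dt * (\<Sum>k<n. V k j)) \<le> dx^2 / 3 * (Kt * (c4 * S))"
      by (simp add: mult_left_mono)
    also have "\<dots> = C * dx^2 * S" unfolding C_def by (simp add: mult_ac)
    finally show "l2norm J (\<lambda>j. dt * (\<Sum>k<n.
        ((scheme_step J (L / (real J - 1)) dt) ^^ (n - 1 - k))
          (\<lambda>i. (L / (real J - 1))^2 *
               L2delta J (L / (real J - 1)) (heat_sol L u0 (real k * dt)) i) j))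
     \<le> C * (L / (real J - 1))^2 * (\<Sum>p. \<bar>alpha L u0 (Suc p)\<bar> * (real (Suc p))^4)"
      unfolding V_def w_def S_def dx_def .
  qed
qed

end
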